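(* Let $p>2$ be a prime, $D$ an integer with $D\not\equiv0\pmod p$, and $\xi\in(0,1)$. Then for any distinct $g,g'\in\mathbb{Z}_p$ there are at least $\xi\cdot(p-1)$ values $c\in\mathbb{Z}_p$ with $c\not\equiv 0\pmod p$ such that \[\mathrm{dist}_{p,D}(c g\bmod p,\ c g'\bmod p) > (1-\xi)\cdot\frac{p-1}{2}.\]
   Context: For $g_0,g_1\in\mathbb{Z}_p$, $\mathrm{dist}_{p,D}(g_0,g_1)=\min\{(g_1-g_0)D^{-1}\bmod p,\ (g_0-g_1)D^{-1}\bmod p\}$, where each term is viewed as an integer in $\{0,\dots,p-1\}$ and $D^{-1}$ is the inverse of $D$ modulo $p$. *)

theory Defs
  imports "HOL-Number_Theory.Number_Theory"
begin

definition inv_mod :: "int \<Rightarrow> int \<Rightarrow> int" where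
  "inv_mod p D = (THE x. x \<in> {0..<p} \<and> [D * x = 1] (mod p))"

definition dist_pD :: "int \<Rightarrow> int \<Rightarrow> int \<Rightarrow> int \<Rightarrow> int" where
  "dist_pD p D g0 g1 = min (((g1 - g0) * inv_mod p D) mod p) (((g0 - g1) * inv_mod p D) mod p)"

end

theory Submission
  imports Defs
begin

lemma inv_mod_prop:
  assumes "prime p" "\<not> [D = 0] (mod p)"
  shows "[D * inv_mod p D = 1] (mod p)"
proof -
  have cop: "coprime D p"
    using assms by (metis cong_0_iff prime_imp_coprime coprime_commute)
  obtain x where x: "[D * x = 1] (mod p)" using cong_solve_coprime_int[OF cop] by blast
  have p0: "p > 0" using assms(1) prime_gt_0_int by blast
  have ex: "\<exists>!y. y \<in> {0..<p} \<and> [D * y = 1] (mod p)"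
  proof
    show "x mod p \<in> {0..<p} \<and> [D * (x mod p) = 1] (mod p)"
      using x p0 by (auto simp: cong_def mod_mult_right_eq)
  next
    fix y assume y: "y \<in> {0..<p} \<and> [D * y = 1] (mod p)"
    have "[D * y = D * (x mod p)] (mod p)"
      using x y by (metis cong_def cong_sym cong_trans mod_mult_right_eq)
    then have "[y = x mod p] (mod p)"
      using cop by (metis cong_mult_lcancel coprime_commute)
    then show "y = x mod p" using y p0 by (simp add: cong_def)
  qed
  show ?thesis unfolding inv_mod_def using theI'[OF ex] by blast
qed

theorem lemma4p1:
  fixes p D g g' :: int and \<xi> :: real
  assumes "prime p" and "p > 2"
    and "\<not> [D = 0] (mod p)"
    and "0 < \<xi>" and "\<xi> < 1"
    and "g \<in> {0..<p}" and "g' \<in> {0..<p}" and "g \<noteq> g'"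
  shows "real (card {c \<in> {0..<p}. \<not> [c = 0] (mod p) \<and>
            real_of_int (dist_pD p D ((c * g) mod p) ((c * g') mod p)) > (1 - \<xi>) * (real_of_int p - 1) / 2})
         \<ge> \<xi> * (real_of_int p - 1)"
proof -
  define Dinv where "Dinv = inv_mod p D"
  have hinv: "[D * Dinv = 1] (mod p)" using inv_mod_prop assms(1,3) Dinv_def by blast
  have ndI: "\<not> p dvd Dinv"
  proof
    assume "p dvd Dinv"
    then have "p dvd D * Dinv" by simp
    then have "[D * Dinv = 0] (mod p)" by (simp add: cong_0_iff)
    then have "[1 = 0] (mod p)" using hinv by (metis cong_sym cong_trans)
    then have "p dvd 1" by (simp add: cong_0_iff cong_sym_eq)
    then show False using assms(1) by (simp add: prime_int_iff)
  qed
  have ndg: "\<not> p dvd (g' - g)"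
  proof
    assume "p dvd (g' - g)"
    then obtain k where k: "g' - g = p * k" by blast
    have "k = 0"
    proof (rule ccontr)
      assume "k \<noteq> 0"
      then have "\<bar>p * k\<bar> \<ge> p" using assms(2) by (simp add: abs_mult mult_le_cancel_left1)
      then show False using k assms(6,7) by auto
    qed
    then show False using k assms(8) by simp
  qed
  define e where "e = (g' - g) * Dinv"
  have nde: "\<not> p dvd e" unfolding e_def using ndI ndg assms(1) prime_dvd_mult_iff by blast
  define f where "f c = (c * e) mod p" for c
  define T where "T = (1 - \<xi>) * (real_of_int p - 1) / 2"
  have p0: "p > 0" using assms(2) by simp
  have fnz: "\<not> p dvd (c * e)" if "c \<in> {1..p-1}" for c
  proof -
    have "\<not> p dvd c" using that zdvd_not_zless by auto
    then show ?thesis using nde assms(1) prime_dvd_mult_iff by blast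
  qed
  have fr: "f c \<in> {1..p-1}" if "c \<in> {1..p-1}" for c
  proof -
    have "f c \<noteq> 0" using fnz[OF that] unfolding f_def by (simp add: dvd_eq_mod_eq_0)
    moreover have "f c \<ge> 0" "f c < p" using p0 unfolding f_def by auto
    ultimately show ?thesis by auto
  qed
  have key: "dist_pD p D ((c*g) mod p) ((c*g') mod p) = min (f c) (p - f c)"
    if "c \<in> {1..p-1}" for c
  proof -
    have a: "((c*g' mod p - c*g mod p) * Dinv) mod p = f c"
      unfolding f_def e_def
      by (metis mod_diff_eq mod_mult_left_eq right_diff_distrib mult.assoc)
    have b0: "((c*g mod p - c*g' mod p) * Dinv) mod p = (- (c*e)) mod p"
      unfolding e_def
      by (metis (no_types, lifting) minus_diff_eq mod_diff_eq mod_mult_left_eq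
          right_diff_distrib mult.assoc mult_minus_left)
    have "(- (c*e)) mod p = p - f c"
      using fnz[OF that] unfolding f_def by (simp add: zmod_zminus1_eq_if dvd_eq_mod_eq_0)
    then show ?thesis unfolding dist_pD_def Dinv_def[symmetric] using a b0 by simp
  qed
  define S where "S = {c \<in> {0..<p}. \<not> [c = 0] (mod p) \<and>
            real_of_int (dist_pD p D ((c * g) mod p) ((c * g') mod p)) > T}"
  define P where "P x = (real_of_int (min x (p - x)) > T)" for x
  have S_eq: "S = {c \<in> {1..p-1}. P (f c)}"
  proof -
    have iff: "c \<in> {0..<p} \<and> \<not> [c = 0] (mod p) \<longleftrightarrow> c \<in> {1..p-1}" for c
      using p0 by (auto simp: cong_def dest: zdvd_imp_le)
    show ?thesis
    proof (rule Set.set_eqI)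
      fix c
      show "c \<in> S \<longleftrightarrow> c \<in> {c \<in> {1..p-1}. P (f c)}"
      proof (cases "c \<in> {1..p-1}")
        case True
        then show ?thesis unfolding S_def P_def using key[OF True] iff[of c] by simp
      next
        case False
        then show ?thesis unfolding S_def using iff[of c] by blast
      qed
    qed
  qed
  have inj: "inj_on f {1..p-1}"
  proof (rule inj_onI)
    fix x y assume x: "x \<in> {1..p-1}" and y: "y \<in> {1..p-1}" and fe: "f x = f y"
    then have "p dvd (x*e - y*e)" unfolding f_def by (simp add: mod_eq_dvd_iff)
    then have "p dvd (x - y) * e" by (simp add: left_diff_distrib)
    then have "p dvd (x - y)" using nde assms(1) prime_dvd_mult_iff by blast
    then obtain k where k: "x - y = p * k" by blast
    have "k = 0"
    proof (rule ccontr)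
      assume "k \<noteq> 0"
      then have "\<bar>p * k\<bar> \<ge> p" using p0 by (simp add: abs_mult mult_le_cancel_left1)
      then show False using k x y by auto
    qed
    then show "x = y" using k by simp
  qed
  have img: "f ` {1..p-1} = {1..p-1}"
    by (rule endo_inj_surj) (use fr inj in auto)
  define X where "X = {x \<in> {1..p-1}. P x}"
  have fS: "f ` S = X"
  proof -
    have "f ` S = {x \<in> f ` {1..p-1}. P x}" unfolding S_eq by auto
    then show ?thesis using img X_def by simp
  qed
  have cS: "card S = card X"
    using fS card_image[OF inj_on_subset[OF inj]] S_eq by (metis (no_types, lifting) mem_Collect_eq subsetI)
  define a where "a = \<lfloor>T\<rfloor> + 1"
  have T0: "T \<ge> 0" unfolding T_def using assms(2,5) by simp
  have Tlt: "2 * T + 1 \<le> real_of_int p - \<xi> * (real_of_int p - 1)"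
    unfolding T_def by (simp add: field_simps)
  have a1: "a \<ge> 1" unfolding a_def using T0 by simp
  have aT: "real_of_int a > T" unfolding a_def by linarith
  have aT2: "real_of_int a \<le> T + 1" unfolding a_def by linarith
  have sub: "{a..p-a} \<subseteq> X"
  proof
    fix x assume x: "x \<in> {a..p-a}"
    then have "real_of_int x \<ge> real_of_int a" "real_of_int (p - x) \<ge> real_of_int a" by auto
    then have "P x" unfolding P_def using aT by linarith
    then show "x \<in> X" unfolding X_def using x a1 by auto
  qed
  have "card {a..p-a} \<le> card X"
    by (rule card_mono) (use sub in \<open>auto simp: X_def intro: finite_subset[of _ "{1..p-1}"]\<close>)
  moreover have "card {a..p-a} = nat (p - a - a + 1)" by simp
  moreover have "real (nat (p - a - a + 1)) \<ge> \<xi> * (real_of_int p - 1)"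
  proof -
    have "real_of_int (p - a - a + 1) \<ge> \<xi> * (real_of_int p - 1)"
      using aT2 Tlt by simp
    then show ?thesis by linarith
  qed
  ultimately have "real (card X) \<ge> \<xi> * (real_of_int p - 1)"
    by (metis of_nat_mono order_trans)
  then show ?thesis using cS unfolding S_def T_def by simp
qed

end
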